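(* Let $(G,\cdot)$ and $(H,\circ)$ be loops isotopic under the triple $(A,B,C)$, and suppose the pair satisfies the $\mathcal{T}$ condition with respect to $(A,B,C)$. Then $(G,\cdot)$ is a WIPL if and only if $(H,\circ)$ is a WIPL.
   Context: Maps are written on the right of their arguments ($xU$) and composed left to right: $UV$ means first apply $U$, then $V$. For a loop $(L,\cdot)$ with identity $e$, $x^\rho$ and $x^\lambda$ denote the right and left inverses of $x$ ($x x^\rho=e=x^\lambda x$), and $J_\rho:x\mapsto x^\rho$, $J_\lambda:x\mapsto x^\lambda$, $L_x:y\mapsto xy$, $R_x:y\mapsto yx$ (so $J_\lambda=J_\rho^{-1}$). $L$ is a weak inverse property loop (WIPL) if $xy\cdot z=e$ implies $x\cdot yz=e$ for all $x,y,z\in L$. A triple $(U,V,W)$ of bijections $G\to H$ between loops $(G,\cdot)$ and $(H,\circ)$ is an isotopism if $xU\circ yV=(x\cdot y)W$ for all $x,y\in G$. For the loop $(H,\circ)$ (identity $e'$) the corresponding maps are denoted $J_\rho'$ ($y\mapsto y^{\rho'}$), $J_\lambda'$ ($y\mapsto y^{\lambda'}$), $L_y'$, $R_y'$. The $\mathcal{T}$ condition: if $(G,\cdot)$ and $(H,\circ)$ are loops isotopic under $(A,B,C)$, the pair satisfies the $\mathcal{T}$ condition if $A=B$ and either $J_\rho'=C^{-1}J_\rho B=A^{-1}J_\rho C$ or $J_\lambda'=C^{-1}J_\lambda A=B^{-1}J_\lambda C$. *)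

theory Defs
  imports Main
begin

definition loop :: "'a set \<Rightarrow> ('a \<Rightarrow> 'a \<Rightarrow> 'a) \<Rightarrow> 'a \<Rightarrow> bool" where
  "loop L m e \<longleftrightarrow>
     e \<in> L \<and>
     (\<forall>x\<in>L. \<forall>y\<in>L. m x y \<in> L) \<and>
     (\<forall>x\<in>L. m e x = x \<and> m x e = x) \<and>
     (\<forall>a\<in>L. \<forall>b\<in>L. \<exists>!x. x \<in> L \<and> m a x = b) \<and>
     (\<forall>a\<in>L. \<forall>b\<in>L. \<exists>!y. y \<in> L \<and> m y a = b)"

definition rinv :: "'a set \<Rightarrow> ('a \<Rightarrow> 'a \<Rightarrow> 'a) \<Rightarrow> 'a \<Rightarrow> 'a \<Rightarrow> 'a" where
  "rinv L m e x = (THE y. y \<in> L \<and> m x y = e)"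

definition linv :: "'a set \<Rightarrow> ('a \<Rightarrow> 'a \<Rightarrow> 'a) \<Rightarrow> 'a \<Rightarrow> 'a \<Rightarrow> 'a" where
  "linv L m e x = (THE y. y \<in> L \<and> m y x = e)"

definition WIPL :: "'a set \<Rightarrow> ('a \<Rightarrow> 'a \<Rightarrow> 'a) \<Rightarrow> 'a \<Rightarrow> bool" where
  "WIPL L m e \<longleftrightarrow> loop L m e \<and>
     (\<forall>x\<in>L. \<forall>y\<in>L. \<forall>z\<in>L. m (m x y) z = e \<longrightarrow> m x (m y z) = e)"

definition isotopism ::
  "'a set \<Rightarrow> ('a \<Rightarrow> 'a \<Rightarrow> 'a) \<Rightarrow> 'b set \<Rightarrow> ('b \<Rightarrow> 'b \<Rightarrow> 'b) \<Rightarrow>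
   ('a \<Rightarrow> 'b) \<Rightarrow> ('a \<Rightarrow> 'b) \<Rightarrow> ('a \<Rightarrow> 'b) \<Rightarrow> bool" where
  "isotopism G m H n U V W \<longleftrightarrow>
     bij_betw U G H \<and> bij_betw V G H \<and> bij_betw W G H \<and>
     (\<forall>x\<in>G. \<forall>y\<in>G. n (U x) (V y) = W (m x y))"

text \<open>The T condition. Maps act on the right and compose left to right, so
  C^{-1} J_rho B is the map y \<mapsto> B (J_rho (C^{-1} y)).\<close>

definition T_condition ::
  "'a set \<Rightarrow> ('a \<Rightarrow> 'a \<Rightarrow> 'a) \<Rightarrow> 'a \<Rightarrow> 'b set \<Rightarrow> ('b \<Rightarrow> 'b \<Rightarrow> 'b) \<Rightarrow> 'b \<Rightarrow>
   ('a \<Rightarrow> 'b) \<Rightarrow> ('a \<Rightarrow> 'b) \<Rightarrow> ('a \<Rightarrow> 'b) \<Rightarrow> bool" where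
  "T_condition G m e H n e' A B C \<longleftrightarrow>
     (\<forall>x\<in>G. A x = B x) \<and>
     ((\<forall>y\<in>H. rinv H n e' y = B (rinv G m e (inv_into G C y)) \<and>
              rinv H n e' y = C (rinv G m e (inv_into G A y)))
      \<or>
      (\<forall>y\<in>H. linv H n e' y = A (linv G m e (inv_into G C y)) \<and>
              linv H n e' y = C (linv G m e (inv_into G B y))))"

end

theory Submission
  imports Defs
begin

lemma loop_rdiv: "loop L m e \<Longrightarrow> a \<in> L \<Longrightarrow> b \<in> L \<Longrightarrow> \<exists>!x. x \<in> L \<and> m a x = b"
  unfolding loop_def by (elim conjE) (rule bspec, rule bspec)
lemma loop_ldiv: "loop L m e \<Longrightarrow> a \<in> L \<Longrightarrow> b \<in> L \<Longrightarrow> \<exists>!y. y \<in> L \<and> m y a = b"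
  unfolding loop_def by (elim conjE) (rule bspec, rule bspec)
lemma loop_closed: "loop L m e \<Longrightarrow> x \<in> L \<Longrightarrow> y \<in> L \<Longrightarrow> m x y \<in> L"
  unfolding loop_def by simp
lemma loop_e: "loop L m e \<Longrightarrow> e \<in> L"
  unfolding loop_def by simp
lemma rinv_prop:
  assumes "loop L m e" "x \<in> L"
  shows "rinv L m e x \<in> L \<and> m x (rinv L m e x) = e"
  unfolding rinv_def by (rule theI', rule loop_rdiv[OF assms loop_e[OF assms(1)]])
lemma rinv_uniq:
  assumes "loop L m e" "x \<in> L" "y \<in> L" "m x y = e"
  shows "y = rinv L m e x"
  unfolding rinv_def by (rule the1_equality[symmetric], rule loop_rdiv[OF assms(1,2) loop_e[OF assms(1)]]) (simp add: assms)
lemma linv_prop: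
  assumes "loop L m e" "x \<in> L"
  shows "linv L m e x \<in> L \<and> m (linv L m e x) x = e"
  unfolding linv_def by (rule theI', rule loop_ldiv[OF assms loop_e[OF assms(1)]])
lemma linv_uniq:
  assumes "loop L m e" "x \<in> L" "y \<in> L" "m y x = e"
  shows "y = linv L m e x"
  unfolding linv_def by (rule the1_equality[symmetric], rule loop_ldiv[OF assms(1,2) loop_e[OF assms(1)]]) (simp add: assms)

theorem mainTheorem6:
  fixes G :: "'a set" and m :: "'a \<Rightarrow> 'a \<Rightarrow> 'a" and e :: 'a
    and H :: "'b set" and n :: "'b \<Rightarrow> 'b \<Rightarrow> 'b" and e' :: 'b
    and A B C :: "'a \<Rightarrow> 'b"
  assumes lG: "loop G m e" and lH: "loop H n e'"
    and iso: "isotopism G m H n A B C"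
    and T: "T_condition G m e H n e' A B C"
  shows "WIPL G m e \<longleftrightarrow> WIPL H n e'"
proof -
  have bA: "bij_betw A G H" and bB: "bij_betw B G H" and bC: "bij_betw C G H"
    and hom: "\<And>x y. x \<in> G \<Longrightarrow> y \<in> G \<Longrightarrow> n (A x) (B y) = C (m x y)"
    using iso unfolding isotopism_def by auto
  have AB: "\<And>x. x \<in> G \<Longrightarrow> A x = B x" using T unfolding T_condition_def by auto
  have invA: "\<And>x. x \<in> G \<Longrightarrow> inv_into G A (A x) = x"
    using bA by (simp add: bij_betw_def inv_into_f_f)
  have invB: "\<And>x. x \<in> G \<Longrightarrow> inv_into G B (B x) = x"
    using bB by (simp add: bij_betw_def inv_into_f_f)
  have invC: "\<And>x. x \<in> G \<Longrightarrow> inv_into G C (C x) = x"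
    using bC by (simp add: bij_betw_def inv_into_f_f)
  have injA: "\<And>x y. x \<in> G \<Longrightarrow> y \<in> G \<Longrightarrow> A x = A y \<Longrightarrow> x = y"
    using bA by (auto simp: bij_betw_def inj_on_def)
  have injC: "\<And>x y. x \<in> G \<Longrightarrow> y \<in> G \<Longrightarrow> C x = C y \<Longrightarrow> x = y"
    using bC by (auto simp: bij_betw_def inj_on_def)
  have surA: "\<And>a. a \<in> H \<Longrightarrow> \<exists>x\<in>G. a = A x" using bA by (auto simp: bij_betw_def)
  have AH: "\<And>x. x \<in> G \<Longrightarrow> A x \<in> H" using bA by (auto simp: bij_betw_def)
  have BH: "\<And>x. x \<in> G \<Longrightarrow> B x \<in> H" using bB by (auto simp: bij_betw_def)
  have CH: "\<And>x. x \<in> G \<Longrightarrow> C x \<in> H" using bC by (auto simp: bij_betw_def)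
  have cG: "\<And>x y. x \<in> G \<Longrightarrow> y \<in> G \<Longrightarrow> m x y \<in> G" using lG loop_closed by metis
  have cH: "\<And>x y. x \<in> H \<Longrightarrow> y \<in> H \<Longrightarrow> n x y \<in> H" using lH loop_closed by metis
  have T2: "(\<forall>y\<in>H. rinv H n e' y = B (rinv G m e (inv_into G C y)) \<and>
              rinv H n e' y = C (rinv G m e (inv_into G A y)))
      \<or> (\<forall>y\<in>H. linv H n e' y = A (linv G m e (inv_into G C y)) \<and>
              linv H n e' y = C (linv G m e (inv_into G B y)))"
    using T unfolding T_condition_def by (elim conjE)
  show ?thesis
  proof (cases "\<forall>y\<in>H. rinv H n e' y = B (rinv G m e (inv_into G C y)) \<and>
              rinv H n e' y = C (rinv G m e (inv_into G A y))")
    case True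
    have R1: "\<And>x. x \<in> G \<Longrightarrow> rinv H n e' (C x) = B (rinv G m e x)"
      using True CH invC by (metis (no_types))
    have R2: "\<And>x. x \<in> G \<Longrightarrow> rinv H n e' (A x) = C (rinv G m e x)"
      using True AH invA by (metis (no_types))
    show ?thesis
    proof
      assume W: "WIPL G m e"
      have Wc: "\<And>x y z. x\<in>G \<Longrightarrow> y\<in>G \<Longrightarrow> z\<in>G \<Longrightarrow> m (m x y) z = e \<Longrightarrow> m x (m y z) = e"
        using W unfolding WIPL_def by blast
      show "WIPL H n e'" unfolding WIPL_def
      proof (intro conjI lH ballI impI)
        fix a b c assume a: "a \<in> H" and b: "b \<in> H" and c: "c \<in> H" and h: "n (n a b) c = e'"
        obtain x where x: "x \<in> G" "a = A x" using surA a by blast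
        obtain y where y: "y \<in> G" "b = A y" using surA b by blast
        have ab: "n a b = C (m x y)" using hom[OF x(1) y(1)] AB[OF y(1)] x(2) y(2) by simp
        have "c = rinv H n e' (n a b)" using rinv_uniq[OF lH cH[OF a b] c h] .
        also have "\<dots> = B (rinv G m e (m x y))" using ab R1 cG x y by simp
        finally have cc: "c = B (rinv G m e (m x y))" .
        define z where "z = rinv G m e (m x y)"
        have z: "z \<in> G" "m (m x y) z = e" using rinv_prop[OF lG cG[OF x(1) y(1)]] z_def by auto
        have yz: "m y z = rinv G m e x"
          using rinv_uniq[OF lG x(1) cG[OF y(1) z(1)] Wc[OF x(1) y(1) z]] .
        have "n b c = C (m y z)" using hom[OF y(1) z(1)] AB[OF y(1)] y(2) cc z_def by simp
        hence "n b c = rinv H n e' a" using yz R2 x by simp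
        thus "n a (n b c) = e'" using rinv_prop[OF lH a] by simp
      qed
    next
      assume W: "WIPL H n e'"
      have Wc: "\<And>x y z. x\<in>H \<Longrightarrow> y\<in>H \<Longrightarrow> z\<in>H \<Longrightarrow> n (n x y) z = e' \<Longrightarrow> n x (n y z) = e'"
        using W unfolding WIPL_def by blast
      show "WIPL G m e" unfolding WIPL_def
      proof (intro conjI lG ballI impI)
        fix x y z assume x: "x \<in> G" and y: "y \<in> G" and z: "z \<in> G" and h: "m (m x y) z = e"
        have zz: "z = rinv G m e (m x y)" using rinv_uniq[OF lG cG[OF x y] z h] .
        have ab: "n (A x) (A y) = C (m x y)" using hom[OF x y] AB[OF y] by simp
        have "B z = rinv H n e' (n (A x) (A y))" using ab R1 cG x y zz by simp
        hence "n (n (A x) (A y)) (B z) = e'" using rinv_prop[OF lH cH[OF AH[OF x] AH[OF y]]] by simp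
        hence "n (A x) (n (A y) (B z)) = e'" using Wc AH x y BH z by blast
        hence "n (A x) (C (m y z)) = e'" using hom[OF y z] AB[OF y] by simp
        hence "C (m y z) = rinv H n e' (A x)" using rinv_uniq[OF lH AH[OF x] CH[OF cG[OF y z]]] by simp
        hence "C (m y z) = C (rinv G m e x)" using R2 x by simp
        hence "m y z = rinv G m e x" using injC cG y z rinv_prop[OF lG x] by blast
        thus "m x (m y z) = e" using rinv_prop[OF lG x] by simp
      qed
    qed
  next
    case False
    hence L: "\<forall>y\<in>H. linv H n e' y = A (linv G m e (inv_into G C y)) \<and>
              linv H n e' y = C (linv G m e (inv_into G B y))" using T2 by blast
    have L1: "\<And>x. x \<in> G \<Longrightarrow> linv H n e' (C x) = A (linv G m e x)"
      using L CH invC by (metis (no_types))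
    have L2: "\<And>x. x \<in> G \<Longrightarrow> linv H n e' (B x) = C (linv G m e x)"
      using L BH invB by (metis (no_types))
    show ?thesis
    proof
      assume W: "WIPL G m e"
      have Wc: "\<And>x y z. x\<in>G \<Longrightarrow> y\<in>G \<Longrightarrow> z\<in>G \<Longrightarrow> m (m x y) z = e \<Longrightarrow> m x (m y z) = e"
        using W unfolding WIPL_def by blast
      show "WIPL H n e'" unfolding WIPL_def
      proof (intro conjI lH ballI impI)
        fix a b c assume a: "a \<in> H" and b: "b \<in> H" and c: "c \<in> H" and h: "n (n a b) c = e'"
        obtain x where x: "x \<in> G" "a = A x" using surA a by blast
        obtain y where y: "y \<in> G" "b = A y" using surA b by blast
        obtain z where z: "z \<in> G" "c = A z" using surA c by blast
        have cB: "c = B z" using z AB by metis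
        have ab: "n a b = C (m x y)" using hom[OF x(1) y(1)] AB[OF y(1)] x(2) y(2) by simp
        have "n a b = linv H n e' c" using linv_uniq[OF lH c cH[OF a b] h] .
        also have "\<dots> = C (linv G m e z)" using L2[OF z(1)] cB by simp
        finally have "m x y = linv G m e z" using ab injC[OF cG[OF x(1) y(1)]] linv_prop[OF lG z(1)] by simp
        hence "m (m x y) z = e" using linv_prop[OF lG z(1)] by simp
        hence xyz: "m x (m y z) = e" using Wc x y z by blast
        have bc: "n b c = C (m y z)" using hom[OF y(1) z(1)] AB[OF y(1)] y(2) cB by simp
        have "x = linv G m e (m y z)" using linv_uniq[OF lG cG[OF y(1) z(1)] x(1) xyz] .
        hence "a = linv H n e' (n b c)" using L1 bc x cG y z by simp
        thus "n a (n b c) = e'" using linv_prop[OF lH cH[OF b c]] by simp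
      qed
    next
      assume W: "WIPL H n e'"
      have Wc: "\<And>x y z. x\<in>H \<Longrightarrow> y\<in>H \<Longrightarrow> z\<in>H \<Longrightarrow> n (n x y) z = e' \<Longrightarrow> n x (n y z) = e'"
        using W unfolding WIPL_def by blast
      show "WIPL G m e" unfolding WIPL_def
      proof (intro conjI lG ballI impI)
        fix x y z assume x: "x \<in> G" and y: "y \<in> G" and z: "z \<in> G" and h: "m (m x y) z = e"
        have zz: "m x y = linv G m e z" using linv_uniq[OF lG z cG[OF x y] h] .
        have ab: "n (A x) (A y) = C (m x y)" using hom[OF x y] AB[OF y] by simp
        have "n (A x) (A y) = linv H n e' (B z)" using ab L2 z zz by simp
        hence "n (n (A x) (A y)) (B z) = e'" using linv_prop[OF lH BH[OF z]] by simp
        hence "n (A x) (n (A y) (B z)) = e'" using Wc AH x y BH z by blast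
        hence "n (A x) (C (m y z)) = e'" using hom[OF y z] AB[OF y] by simp
        hence "A x = linv H n e' (C (m y z))" using linv_uniq[OF lH CH[OF cG[OF y z]] AH[OF x]] by simp
        hence "A x = A (linv G m e (m y z))" using L1 cG y z by simp
        hence "x = linv G m e (m y z)" using injA x linv_prop[OF lG cG[OF y z]] by blast
        thus "m x (m y z) = e" using linv_prop[OF lG cG[OF y z]] by simp
      qed
    qed
  qed
qed

end
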